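(* Let $X=(x_1,\ldots,x_n)$, $\widetilde{X}=(-x_1,x_2,\ldots,x_n)$ and $X'=(x_2,\ldots,x_n)$. For any partition $\lambda\in\mathcal{E}_n$ of length $\ell\geqslant1$, $$\sum_{i=1}^{\ell}(-1)^{i-1}\,\widetilde{P}_{\lambda\smallsetminus\{\lambda_i\}}(X)\,e_{\lambda_i}(X')=\widetilde{P}_\lambda(\widetilde{X})+(-1)^{\ell+1}\widetilde{P}_\lambda(X).$$
   Context: $\mathcal{E}_n$ is the set of all (not necessarily strict) partitions with all parts $\leqslant n$. $e_k$ denotes the $k$-th elementary symmetric polynomial. For a list of variables $Y$: $\widetilde{P}_0(Y)=1$, $\widetilde{P}_i(Y)=e_i(Y)/2$ for $i>0$; for $i\geqslant j\geqslant0$, $\widetilde{P}_{i,j}(Y)=\widetilde{P}_i\widetilde{P}_j+2\sum_{k=1}^{j-1}(-1)^k\widetilde{P}_{i+k}\widetilde{P}_{j-k}+(-1)^j\widetilde{P}_{i+j}$; for a partition $\mu$ of length $m$, $\widetilde{P}_\mu(Y)=\mathrm{Pfaffian}[\widetilde{P}_{\mu_i,\mu_j}(Y)]_{1\leqslant i<j\leqslant 2\lfloor(m+1)/2\rfloor}$ (with $\mu_{m+1}=0$; $\widetilde P$ of the empty partition is $1$). $\lambda\smallsetminus\{\lambda_i\}$ denotes the partition obtained from $\lambda$ by removing its $i$-th part. *)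

theory Defs
  imports Complex_Main
begin

definition esym :: "nat \<Rightarrow> 'a::comm_ring_1 list \<Rightarrow> 'a" where
  "esym k xs = (\<Sum>S\<in>{S. S \<subseteq> {..<length xs} \<and> card S = k}. \<Prod>i\<in>S. xs ! i)"

definition Pt1 :: "nat \<Rightarrow> 'a::field_char_0 list \<Rightarrow> 'a" where
  "Pt1 i ys = (if i = 0 then 1 else esym i ys / 2)"

definition Pt2 :: "nat \<Rightarrow> nat \<Rightarrow> 'a::field_char_0 list \<Rightarrow> 'a" where
  "Pt2 i j ys = (if j = 0 then Pt1 i ys else
     Pt1 i ys * Pt1 j ys
     + 2 * (\<Sum>k\<in>{1..<j}. (-1) ^ k * Pt1 (i + k) ys * Pt1 (j - k) ys)
     + (-1) ^ j * Pt1 (i + j) ys)"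

function pfaff :: "(nat \<Rightarrow> nat \<Rightarrow> 'a::comm_ring_1) \<Rightarrow> nat list \<Rightarrow> 'a" where
  "pfaff a [] = 1"
| "pfaff a (i # is) =
     (\<Sum>k<length is. (-1) ^ k * a i (is ! k) * pfaff a (take k is @ drop (Suc k) is))"
  by pat_completeness auto
termination
  by (relation "measure (\<lambda>(a, xs). length xs)") auto

definition Ptl :: "nat list \<Rightarrow> 'a::field_char_0 list \<Rightarrow> 'a" where
  "Ptl mu ys =
     (let mu' = (if odd (length mu) then mu @ [0] else mu)
      in pfaff (\<lambda>i j. Pt2 (mu' ! i) (mu' ! j) ys) [0..<length mu'])"

definition in_E :: "nat \<Rightarrow> nat list \<Rightarrow> bool" where
  "in_E n lam \<longleftrightarrow> sorted_wrt (\<ge>) lam \<and> (\<forall>p\<in>set lam. 0 < p \<and> p \<le> n)"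

text \<open>lam minus its i-th part (1-indexed).\<close>
definition remove_part :: "nat list \<Rightarrow> nat \<Rightarrow> nat list" where
  "remove_part lam i = take (i - 1) lam @ drop i lam"

end

theory Submission
  imports Defs
begin

fun idx :: "'b list \<Rightarrow> 'b \<Rightarrow> nat" where
  "idx [] x = 0"
| "idx (y # ys) x = (if y = x then 0 else Suc (idx ys x))"

definition skew :: "(nat \<Rightarrow> nat \<Rightarrow> 'a::comm_ring_1) \<Rightarrow> bool" where
  "skew a \<longleftrightarrow> (\<forall>i j. a j i = - a i j)"

lemma idx_nth: "distinct xs \<Longrightarrow> k < length xs \<Longrightarrow> idx xs (xs ! k) = k"
proof (induction xs arbitrary: k)
  case Nil then show ?case by simp
next
  case (Cons y ys) then show ?case by (cases k) auto
qed

lemma del_remove1: "distinct xs \<Longrightarrow> k < length xs \<Longrightarrow> take k xs @ drop (Suc k) xs = remove1 (xs ! k) xs"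
proof (induction xs arbitrary: k)
  case Nil then show ?case by simp
next
  case (Cons y ys)
  show ?case
  proof (cases k)
    case 0 then show ?thesis by simp
  next
    case (Suc k')
    then have "k' < length ys" using Cons.prems by simp
    then have "ys ! k' \<in> set ys" by (rule nth_mem)
    then have "y \<noteq> ys ! k'" using Cons.prems by auto
    then show ?thesis using Cons Suc by simp
  qed
qed

lemma pfaff_Cons_set:
  assumes "distinct is"
  shows "pfaff a (i # is) = (\<Sum>x\<in>set is. (-1) ^ idx is x * a i x * pfaff a (remove1 x is))"
proof -
  have "pfaff a (i # is) = (\<Sum>k<length is. (-1) ^ k * a i (is ! k) * pfaff a (take k is @ drop (Suc k) is))"
    by (simp only: pfaff.simps)
  also have "\<dots> = (\<Sum>k<length is. (-1) ^ idx is (is ! k) * a i (is ! k) * pfaff a (remove1 (is ! k) is))"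
    apply (rule sum.cong[OF refl])
    using assms by (simp add: idx_nth del_remove1)
  also have "\<dots> = (\<Sum>x\<in>set is. (-1) ^ idx is x * a i x * pfaff a (remove1 x is))"
    using sum.reindex_bij_betw[OF bij_betw_nth[OF assms refl refl], of "\<lambda>x. (-1) ^ idx is x * a i x * pfaff a (remove1 x is)"]
    by simp
  finally show ?thesis .
qed

lemma set_del_subset: "set (take k xs @ drop (Suc k) xs) \<subseteq> set xs"
  using set_take_subset[of k xs] set_drop_subset[of "Suc k" xs] by auto

lemma pfaff_cong:
  "(\<And>x y. x \<in> set L \<Longrightarrow> y \<in> set L \<Longrightarrow> a x y = b x y) \<Longrightarrow> pfaff a L = pfaff b L"
proof (induction a L rule: pfaff.induct)
  case (1 a) then show ?case by simp
next
  case (2 a i "is")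
  have A: "pfaff a (take k is @ drop (Suc k) is) = pfaff b (take k is @ drop (Suc k) is)" if "k < length is" for k
  proof (rule 2(1))
    show "k \<in> {..<length is}" using that by simp
    fix x y assume "x \<in> set (take k is @ drop (Suc k) is)" "y \<in> set (take k is @ drop (Suc k) is)"
    then show "a x y = b x y" using 2(2) set_del_subset[of k "is"] by auto
  qed
  have B: "a i (is ! k) = b i (is ! k)" if "k < length is" for k
    using 2(2) that by simp
  show ?case
    unfolding pfaff.simps
    by (rule sum.cong[OF refl]) (simp add: A B)
qed

lemma pfaff_map:
  "pfaff a (map h L) = pfaff (\<lambda>i j. a (h i) (h j)) L"
proof (induction "length L" arbitrary: L rule: less_induct)
  case less
  show ?case
  proof (cases L)
    case Nil then show ?thesis by simp
  next
    case (Cons i "is")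
    have "pfaff a (map h (take k is @ drop (Suc k) is)) = pfaff (\<lambda>i j. a (h i) (h j)) (take k is @ drop (Suc k) is)" if "k < length is" for k
      by (rule less) (use Cons that in auto)
    moreover have "take k (map h is) @ drop (Suc k) (map h is) = map h (take k is @ drop (Suc k) is)" for k
      by (simp add: take_map drop_map)
    ultimately have "(\<Sum>k<length is. (-1)^k * a (h i) (h (is ! k)) * pfaff a (take k (map h is) @ drop (Suc k) (map h is)))
       = (\<Sum>k<length is. (-1)^k * a (h i) (h (is ! k)) * pfaff (\<lambda>i j. a (h i) (h j)) (take k is @ drop (Suc k) is))"
      by (intro sum.cong) simp_all
    then show ?thesis using Cons by simp
  qed
qed

declare pfaff.simps(2)[simp del]

lemma idx_less: "x \<in> set ys \<Longrightarrow> idx ys x < length ys"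
  by (induction ys) auto

lemma idx_inj: "x \<in> set ys \<Longrightarrow> y \<in> set ys \<Longrightarrow> idx ys x = idx ys y \<Longrightarrow> x = y"
  by (induction ys) (auto split: if_splits)

lemma idx_remove1:
  "distinct ys \<Longrightarrow> x \<in> set ys \<Longrightarrow> y \<in> set ys \<Longrightarrow> x \<noteq> y \<Longrightarrow>
   idx (remove1 x ys) y = (if idx ys x < idx ys y then idx ys y - 1 else idx ys y)"
  by (induction ys) auto

lemma sum_swap_offdiag:
  fixes f :: "'b \<Rightarrow> 'b \<Rightarrow> 'c::comm_monoid_add"
  assumes "finite S"
  shows "(\<Sum>x\<in>S. \<Sum>y\<in>S-{x}. f x y) = (\<Sum>y\<in>S. \<Sum>x\<in>S-{y}. f x y)"
proof -
  have e: "(\<Sum>y\<in>S-{x}. g y) = (\<Sum>y\<in>S. if y = x then 0 else g y)" for x and g :: "'b \<Rightarrow> 'c"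
    using assms by (intro sum.mono_neutral_cong_left) auto
  have "(\<Sum>x\<in>S. \<Sum>y\<in>S-{x}. f x y) = (\<Sum>x\<in>S. \<Sum>y\<in>S. if y = x then 0 else f x y)"
    by (simp add: e)
  also have "\<dots> = (\<Sum>y\<in>S. \<Sum>x\<in>S. if y = x then 0 else f x y)"
    by (rule sum.swap)
  also have "\<dots> = (\<Sum>y\<in>S. \<Sum>x\<in>S-{y}. f x y)"
    by (simp add: e eq_commute)
  finally show ?thesis .
qed

definition T2 :: "(nat \<Rightarrow> nat \<Rightarrow> 'a::comm_ring_1) \<Rightarrow> nat list \<Rightarrow> nat \<Rightarrow> nat \<Rightarrow> 'a" where
  "T2 a ys i j = (\<Sum>x\<in>set ys. \<Sum>y\<in>set ys - {x}.
      (-1) ^ (idx ys x + idx (remove1 x ys) y) * a i x * a j y * pfaff a (remove1 y (remove1 x ys)))"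

lemma pfaff_two:
  assumes "distinct (i # j # ys)"
  shows "pfaff a (i # j # ys) = a i j * pfaff a ys - T2 a ys i j"
proof -
  have dj: "distinct (j # ys)" and dys: "distinct ys" and jn: "j \<notin> set ys" using assms by auto
  have "pfaff a (i # j # ys) = (\<Sum>x\<in>insert j (set ys). (-1) ^ idx (j # ys) x * a i x * pfaff a (remove1 x (j # ys)))"
    using pfaff_Cons_set[OF dj] by simp
  also have "\<dots> = a i j * pfaff a ys + (\<Sum>x\<in>set ys. (-1) ^ idx (j # ys) x * a i x * pfaff a (remove1 x (j # ys)))"
    using jn by (simp add: sum.insert)
  also have "(\<Sum>x\<in>set ys. (-1) ^ idx (j # ys) x * a i x * pfaff a (remove1 x (j # ys)))
      = (\<Sum>x\<in>set ys. - ((-1) ^ idx ys x * a i x * pfaff a (j # remove1 x ys)))"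
  proof (rule sum.cong[OF refl])
    fix x assume "x \<in> set ys"
    then have "x \<noteq> j" using jn by auto
    then show "(-1) ^ idx (j # ys) x * a i x * pfaff a (remove1 x (j # ys)) = - ((-1) ^ idx ys x * a i x * pfaff a (j # remove1 x ys))"
      by simp
  qed
  also have "\<dots> = - T2 a ys i j"
    unfolding sum_negf T2_def
  proof (rule arg_cong[where f = uminus], rule sum.cong[OF refl])
    fix x assume x: "x \<in> set ys"
    have "pfaff a (j # remove1 x ys) = (\<Sum>y\<in>set ys - {x}. (-1) ^ idx (remove1 x ys) y * a j y * pfaff a (remove1 y (remove1 x ys)))"
      using pfaff_Cons_set[of "remove1 x ys" a j] dys by simp
    then show "(-1) ^ idx ys x * a i x * pfaff a (j # remove1 x ys) = (\<Sum>y\<in>set ys - {x}.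
      (-1) ^ (idx ys x + idx (remove1 x ys) y) * a i x * a j y * pfaff a (remove1 y (remove1 x ys)))"
      by (simp add: sum_distrib_left power_add mult.assoc mult.left_commute)
  qed
  finally show ?thesis by simp
qed

lemma sign_swap:
  fixes p q :: nat
  assumes "p \<noteq> q"
  shows "(-1::'a::comm_ring_1) ^ (q + (if q < p then p - 1 else p)) = - ((-1) ^ (p + (if p < q then q - 1 else q)))"
proof (cases "p < q")
  case True
  then obtain q' where "q = Suc q'" by (cases q) auto
  then show ?thesis using True by (simp add: algebra_simps)
next
  case False
  then have "q < p" using assms by simp
  then obtain p' where "p = Suc p'" by (cases p) auto
  then show ?thesis using \<open>q < p\<close> by (simp add: algebra_simps)
qed

lemma T2_swap:
  assumes "distinct ys"
  shows "T2 a ys j i = - T2 a ys i j"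
proof -
  let ?S = "set ys"
  have "T2 a ys j i = (\<Sum>y\<in>?S. \<Sum>x\<in>?S-{y}.
      (-1) ^ (idx ys x + idx (remove1 x ys) y) * a j x * a i y * pfaff a (remove1 y (remove1 x ys)))"
    unfolding T2_def by (rule sum_swap_offdiag) simp
  also have "\<dots> = (\<Sum>y\<in>?S. \<Sum>x\<in>?S-{y}.
      - ((-1) ^ (idx ys y + idx (remove1 y ys) x) * a i y * a j x * pfaff a (remove1 x (remove1 y ys))))"
  proof (intro sum.cong refl)
    fix y x assume y: "y \<in> ?S" and x: "x \<in> ?S - {y}"
    have ne: "idx ys x \<noteq> idx ys y" using idx_inj[of x ys y] x y by auto
    have "(-1::'a) ^ (idx ys x + idx (remove1 x ys) y) = - ((-1) ^ (idx ys y + idx (remove1 y ys) x))"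
      using idx_remove1[OF assms, of x y] idx_remove1[OF assms, of y x] x y
        sign_swap[OF ne[symmetric], where 'a='a] by auto
    then show "(-1) ^ (idx ys x + idx (remove1 x ys) y) * a j x * a i y * pfaff a (remove1 y (remove1 x ys)) =
      - ((-1) ^ (idx ys y + idx (remove1 y ys) x) * a i y * a j x * pfaff a (remove1 x (remove1 y ys)))"
      by (simp add: remove1_commute[of x y] algebra_simps)
  qed
  also have "\<dots> = - T2 a ys i j"
    unfolding T2_def by (simp add: sum_negf)
  finally show ?thesis .
qed

lemma pfaff_swap_front:
  assumes "distinct (i # j # ys)" "skew a"
  shows "pfaff a (i # j # ys) = - pfaff a (j # i # ys)"
proof -
  have d2: "distinct (j # i # ys)" using assms by auto
  have dys: "distinct ys" using assms by auto
  have "a j i = - a i j" using assms(2) unfolding skew_def by blast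
  then show ?thesis
    unfolding pfaff_two[OF assms(1)] pfaff_two[OF d2] T2_swap[OF dys, of a i j]
    by (simp add: algebra_simps)
qed

lemma idx_append: "idx (xs @ ys) x = (if x \<in> set xs then idx xs x else length xs + idx ys x)"
  by (induction xs) auto

lemma pfaff_swap:
  assumes "distinct (xs @ i # j # ys)" "skew a"
  shows "pfaff a (xs @ i # j # ys) = - pfaff a (xs @ j # i # ys)"
  using assms(1)
proof (induction "length xs" arbitrary: xs ys rule: less_induct)
  case less
  show ?case
  proof (cases xs)
    case Nil
    have "distinct (i # j # ys)" using less.prems Nil by simp
    from pfaff_swap_front[OF this assms(2)] show ?thesis unfolding Nil append_Nil .
  next
    case (Cons w xs')
    define L0 where "L0 = xs' @ i # j # ys"
    define L1 where "L1 = xs' @ j # i # ys"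
    have d0: "distinct L0" and d1: "distinct L1" using less.prems Cons unfolding L0_def L1_def by auto
    have s: "set L1 = set L0" unfolding L0_def L1_def by auto
    have ij: "i \<noteq> j" "i \<notin> set xs'" "j \<notin> set xs'" "i \<notin> set ys" "j \<notin> set ys"
      using less.prems Cons by auto
    have key: "(-1) ^ idx L0 z * a w z * pfaff a (remove1 z L0) = - ((-1) ^ idx L1 z * a w z * pfaff a (remove1 z L1))"
      if z: "z \<in> set L0" for z
    proof -
      consider (A) "z \<in> set xs'" | (B) "z = i" | (C) "z = j" | (D) "z \<in> set ys"
        using z unfolding L0_def by auto
      then show ?thesis
      proof cases
        case A
        have IH: "pfaff a (remove1 z xs' @ i # j # ys) = - pfaff a (remove1 z xs' @ j # i # ys)"
        proof (rule less.hyps)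
          show "length (remove1 z xs') < length xs" using Cons A by (simp add: length_remove1)
          have "distinct (remove1 z L0)" using d0 by simp
          then show "distinct (remove1 z xs' @ i # j # ys)" using A unfolding L0_def by (simp add: remove1_append)
        qed
        have e: "remove1 z L0 = remove1 z xs' @ i # j # ys" "remove1 z L1 = remove1 z xs' @ j # i # ys"
          "idx L0 z = idx L1 z"
          using A unfolding L0_def L1_def by (simp_all add: remove1_append idx_append)
        show ?thesis unfolding e IH by (simp only: mult_minus_right)
      next
        case B
        then show ?thesis using ij unfolding L0_def L1_def by (simp add: remove1_append idx_append)
      next
        case C
        then show ?thesis using ij unfolding L0_def L1_def by (simp add: remove1_append idx_append)
      next
        case D
        have zx: "z \<notin> set xs'" "z \<noteq> i" "z \<noteq> j" using D less.prems Cons by auto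
        have IH: "pfaff a (xs' @ i # j # remove1 z ys) = - pfaff a (xs' @ j # i # remove1 z ys)"
        proof (rule less.hyps)
          show "length xs' < length xs" using Cons by simp
          have "distinct (remove1 z L0)" using d0 by simp
          then show "distinct (xs' @ i # j # remove1 z ys)" using zx unfolding L0_def by (simp add: remove1_append)
        qed
        have e: "remove1 z L0 = xs' @ i # j # remove1 z ys" "remove1 z L1 = xs' @ j # i # remove1 z ys"
          "idx L0 z = idx L1 z"
          using zx unfolding L0_def L1_def by (simp_all add: remove1_append idx_append)
        show ?thesis unfolding e IH by (simp only: mult_minus_right)
      qed
    qed
    have "pfaff a (xs @ i # j # ys) = (\<Sum>z\<in>set L0. (-1) ^ idx L0 z * a w z * pfaff a (remove1 z L0))"
      using pfaff_Cons_set[OF d0, of a w] Cons unfolding L0_def by simp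
    also have "\<dots> = (\<Sum>z\<in>set L0. - ((-1) ^ idx L1 z * a w z * pfaff a (remove1 z L1)))"
      by (rule sum.cong[OF refl]) (rule key)
    also have "\<dots> = - pfaff a (xs @ j # i # ys)"
      using pfaff_Cons_set[OF d1, of a w] Cons s unfolding L1_def by (simp add: sum_negf)
    finally show ?thesis .
  qed
qed

lemma pfaff_move:
  assumes "distinct (pre @ ps @ z # qs)" "skew a"
  shows "pfaff a (pre @ ps @ z # qs) = (-1) ^ length ps * pfaff a (pre @ z # ps @ qs)"
  using assms(1)
proof (induction ps arbitrary: qs rule: rev_induct)
  case Nil then show ?case by simp
next
  case (snoc p ps')
  have "pfaff a (pre @ (ps' @ [p]) @ z # qs) = pfaff a ((pre @ ps') @ p # z # qs)" by simp
  also have "\<dots> = - pfaff a ((pre @ ps') @ z # p # qs)"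
    by (rule pfaff_swap[OF _ assms(2)]) (use snoc.prems in simp)
  also have "pfaff a ((pre @ ps') @ z # p # qs) = pfaff a (pre @ ps' @ z # (p # qs))" by simp
  also have "\<dots> = (-1) ^ length ps' * pfaff a (pre @ z # ps' @ p # qs)"
    by (rule snoc.IH) (use snoc.prems in auto)
  finally show ?case by simp
qed

lemma skew_diag: "skew (a :: nat \<Rightarrow> nat \<Rightarrow> 'a::field_char_0) \<Longrightarrow> a i i = 0"
proof -
  assume "skew a"
  then have "a i i = - a i i" unfolding skew_def by blast
  then have "a i i + a i i = 0" by (metis add.right_inverse)
  then have "(2::'a) * a i i = 0" by (metis mult_2)
  then show "a i i = 0" by simp
qed

lemma neg_self_zero: "(p::'a::field_char_0) = - p \<Longrightarrow> p = 0"
proof -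
  assume "p = - p"
  then have "p + p = 0" by (metis add.right_inverse)
  then have "(2::'a) * p = 0" by (metis mult_2)
  then show "p = 0" by simp
qed

lemma pfaff_eq_rows:
  fixes b :: "nat \<Rightarrow> nat \<Rightarrow> 'a::field_char_0"
  assumes d: "distinct L" and sk: "skew b" and xL: "x \<in> set L" and zL: "z \<in> set L" and xz: "x \<noteq> z"
    and eq: "\<And>j. j \<in> set L \<Longrightarrow> b x j = b z j"
  shows "pfaff b L = 0"
proof -
  obtain ps qs where L: "L = ps @ x # qs" using split_list[OF xL] by blast
  have m1: "pfaff b L = (-1) ^ length ps * pfaff b (x # ps @ qs)"
    using pfaff_move[of "[]" ps x qs b] d sk L by simp
  have "z \<in> set (ps @ qs)" using zL xz L by auto
  then obtain ps2 qs2 where R: "ps @ qs = ps2 @ z # qs2" using split_list by metis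
  have "distinct (x # ps @ qs)" using d L by auto
  then have dxR: "distinct (x # ps2 @ z # qs2)" using R by simp
  have m2: "pfaff b (x # ps @ qs) = (-1) ^ length ps2 * pfaff b (x # z # ps2 @ qs2)"
    using pfaff_move[of "[x]" ps2 z qs2 b] dxR sk R by simp
  define R' where "R' = ps2 @ qs2"
  have dR: "distinct (x # z # R')" using dxR unfolding R'_def by auto
  have "set (x # z # R') = set (x # ps2 @ z # qs2)" unfolding R'_def by auto
  also have "\<dots> = set (x # ps @ qs)" by (simp only: R)
  also have "\<dots> = set L" using L by auto
  finally have sub: "set (x # z # R') \<subseteq> set L" by simp
  define h where "h = (\<lambda>k. if k = x then z else if k = z then x else k)"
  have mh: "map h (x # z # R') = z # x # R'"
    using dR unfolding h_def by (auto intro!: map_idI)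
  have eqs: "b j x = b j z" if "j \<in> set L" for j
    using eq[OF that] sk unfolding skew_def by metis
  have zz: "b x x = 0" "b z z = 0" using skew_diag[OF sk] by auto
  have xz0a: "b x z = 0" using eq[OF zL] zz by auto
  have "b z x = - b x z" using sk unfolding skew_def by blast
  then have xz0: "b x z = 0" "b z x = 0" using xz0a by simp_all
  have "pfaff b (z # x # R') = pfaff (\<lambda>i j. b (h i) (h j)) (x # z # R')"
    by (metis mh pfaff_map)
  also have "\<dots> = pfaff b (x # z # R')"
  proof (rule pfaff_cong)
    fix i j assume i: "i \<in> set (x # z # R')" and j: "j \<in> set (x # z # R')"
    then have iL: "i \<in> set L" and jL: "j \<in> set L" using sub by auto
    have hj: "h j \<in> set L" using jL xL zL unfolding h_def by auto
    have r: "b (h i) k = b i k" if "k \<in> set L" for k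
      unfolding h_def using eq[OF that] by auto
    have c: "b k (h j) = b k j" if "k \<in> set L" for k
      unfolding h_def using eqs[OF that] by auto
    show "b (h i) (h j) = b i j" using r[OF hj] c[OF iL] by simp
  qed
  finally have "pfaff b (x # z # R') = - pfaff b (x # z # R')"
    using pfaff_swap_front[OF dR sk] by simp
  then have "pfaff b (x # z # R') = 0" by (rule neg_self_zero)
  then show ?thesis using m1 m2 unfolding R'_def by simp
qed

lemma pfaff_rowop:
  fixes a a' :: "nat \<Rightarrow> nat \<Rightarrow> 'a::field_char_0"
  assumes d: "distinct L" and ska: "skew a" and ska': "skew a'" and xL: "x \<in> set L" and zL: "z \<in> set L"
    and xz: "x \<noteq> z"
    and row: "\<And>j. j \<noteq> x \<Longrightarrow> a' x j = a x j + t * a z j"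
    and rest: "\<And>i j. i \<noteq> x \<Longrightarrow> j \<noteq> x \<Longrightarrow> a' i j = a i j"
  shows "pfaff a' L = pfaff a L"
proof -
  obtain ps qs where L: "L = ps @ x # qs" using split_list[OF xL] by blast
  define R where "R = ps @ qs"
  have dxR: "distinct (x # R)" using d L unfolding R_def by auto
  have dR: "distinct R" and xR: "x \<notin> set R" using dxR by auto
  have zR: "z \<in> set R" using zL xz L unfolding R_def by auto
  have m: "pfaff c L = (-1) ^ length ps * pfaff c (x # R)" if "skew c" for c :: "nat \<Rightarrow> nat \<Rightarrow> 'a"
    using pfaff_move[of "[]" ps x qs c] d that L unfolding R_def by simp
  define b where "b = (\<lambda>i j. if i = x \<and> j = x then 0 else if i = x then a z j else if j = x then - a z i else a i j)"
  have skb: "skew b" unfolding skew_def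
  proof (intro allI)
    fix i j
    have "a j i = - a i j" using ska unfolding skew_def by blast
    then show "b j i = - b i j" unfolding b_def by auto
  qed
  have azz: "a z z = 0" by (rule skew_diag[OF ska])
  have b0: "pfaff b (x # R) = 0"
  proof (rule pfaff_eq_rows[OF dxR skb, of x z])
    show "x \<in> set (x # R)" "z \<in> set (x # R)" "x \<noteq> z" using zR xz by auto
    fix j assume "j \<in> set (x # R)"
    show "b x j = b z j" unfolding b_def using xz azz by auto
  qed
  have cR: "pfaff c (remove1 w R) = pfaff a (remove1 w R)"
    if "\<And>i j. i \<noteq> x \<Longrightarrow> j \<noteq> x \<Longrightarrow> c i j = a i j" for c w
  proof (rule pfaff_cong)
    fix i j assume "i \<in> set (remove1 w R)" "j \<in> set (remove1 w R)"
    then have "i \<noteq> x" "j \<noteq> x" using xR set_remove1_subset[of w R] by auto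
    then show "c i j = a i j" by (rule that)
  qed
  have "pfaff a' (x # R) = (\<Sum>w\<in>set R. (-1) ^ idx R w * a' x w * pfaff a' (remove1 w R))"
    by (rule pfaff_Cons_set[OF dR])
  also have "\<dots> = (\<Sum>w\<in>set R. (-1) ^ idx R w * a x w * pfaff a (remove1 w R))
      + t * (\<Sum>w\<in>set R. (-1) ^ idx R w * b x w * pfaff b (remove1 w R))"
    unfolding sum_distrib_left sum.distrib[symmetric]
  proof (rule sum.cong[OF refl])
    fix w assume w: "w \<in> set R"
    then have wx: "w \<noteq> x" using xR by auto
    have "pfaff a' (remove1 w R) = pfaff a (remove1 w R)" by (rule cR) (rule rest)
    moreover have "pfaff b (remove1 w R) = pfaff a (remove1 w R)" by (rule cR) (simp add: b_def)
    moreover have "a' x w = a x w + t * a z w" using row[OF wx] .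
    moreover have "b x w = a z w" using wx unfolding b_def by simp
    ultimately show "(-1) ^ idx R w * a' x w * pfaff a' (remove1 w R) =
      (-1) ^ idx R w * a x w * pfaff a (remove1 w R) + t * ((-1) ^ idx R w * b x w * pfaff b (remove1 w R))"
      by (simp add: algebra_simps)
  qed
  also have "\<dots> = pfaff a (x # R) + t * pfaff b (x # R)"
    using pfaff_Cons_set[OF dR, of a x] pfaff_Cons_set[OF dR, of b x] by simp
  finally have "pfaff a' (x # R) = pfaff a (x # R)" using b0 by simp
  then show ?thesis using m[OF ska] m[OF ska'] by simp
qed

definition rowops :: "(nat \<Rightarrow> nat \<Rightarrow> 'a::comm_ring_1) \<Rightarrow> nat \<Rightarrow> (nat \<Rightarrow> 'a) \<Rightarrow> nat set \<Rightarrow> nat \<Rightarrow> nat \<Rightarrow> 'a" where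
  "rowops a z t S = (\<lambda>i j. a i j + (if i \<in> S then t i * a z j else 0) - (if j \<in> S then t j * a z i else 0))"

lemma skew_rowops: "skew a \<Longrightarrow> skew (rowops a z t S)"
  unfolding skew_def
proof (intro allI)
  fix i j assume "\<forall>i j. a j i = - a i j"
  then have "a j i = - a i j" by blast
  then show "rowops a z t S j i = - rowops a z t S i j" unfolding rowops_def by (simp add: algebra_simps)
qed

lemma pfaff_rowops:
  fixes a :: "nat \<Rightarrow> nat \<Rightarrow> 'a::field_char_0"
  assumes d: "distinct L" and ska: "skew a" and zL: "z \<in> set L"
    and fin: "finite S" and SL: "S \<subseteq> set L" and zS: "z \<notin> S"
  shows "pfaff (rowops a z t S) L = pfaff a L"
  using fin SL zS
proof (induction S rule: finite_induct)
  case empty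
  have "rowops a z t {} = a" unfolding rowops_def by (intro ext) simp
  then show ?case by simp
next
  case (insert x S)
  have azz: "a z z = 0" by (rule skew_diag[OF ska])
  have "pfaff (rowops a z t (insert x S)) L = pfaff (rowops a z t S) L"
  proof (rule pfaff_rowop[OF d skew_rowops[OF ska] skew_rowops[OF ska], of x z])
    show "x \<in> set L" "z \<in> set L" "x \<noteq> z" using insert.prems zL by auto
    fix j assume "j \<noteq> x"
    then show "rowops a z t (insert x S) x j = rowops a z t S x j + t x * rowops a z t S z j"
      using insert.hyps insert.prems azz unfolding rowops_def by (simp add: algebra_simps)
  next
    fix i j assume "i \<noteq> x" "j \<noteq> x"
    then show "rowops a z t (insert x S) i j = rowops a z t S i j"
      unfolding rowops_def by simp
  qed
  also have "\<dots> = pfaff a L" using insert by simp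
  finally show ?case .
qed

lemma pfaff_last:
  assumes d: "distinct (M @ [z])" and od: "odd (length M)" and sk: "skew a"
  shows "pfaff a (M @ [z]) = (\<Sum>x\<in>set M. (-1) ^ idx M x * a x z * pfaff a (remove1 x M))"
proof -
  have "pfaff a (M @ [z]) = - pfaff a (z # M)"
    using pfaff_move[of "[]" M z "[]" a] d sk od by simp
  also have "\<dots> = - (\<Sum>x\<in>set M. (-1) ^ idx M x * a z x * pfaff a (remove1 x M))"
    using pfaff_Cons_set[of M a z] d by simp
  also have "\<dots> = (\<Sum>x\<in>set M. (-1) ^ idx M x * a x z * pfaff a (remove1 x M))"
    unfolding sum_negf[symmetric]
  proof (rule sum.cong[OF refl])
    fix x have "a z x = - a x z" using sk unfolding skew_def by blast
    then show "- ((-1) ^ idx M x * a z x * pfaff a (remove1 x M)) = (-1) ^ idx M x * a x z * pfaff a (remove1 x M)"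
      by simp
  qed
  finally show ?thesis .
qed

lemma pfaff_last2:
  assumes d: "distinct (M @ [z, y])" and ev: "even (length M)" and sk: "skew a"
  shows "pfaff a (M @ [z, y]) = (\<Sum>x\<in>set M. (-1) ^ idx M x * a x y * pfaff a (remove1 x M @ [z])) + a z y * pfaff a M"
proof -
  have d': "distinct ((M @ [z]) @ [y])" using d by simp
  have zM: "z \<notin> set M" using d by simp
  have "pfaff a (M @ [z, y]) = pfaff a ((M @ [z]) @ [y])" by simp
  also have "\<dots> = (\<Sum>x\<in>set (M @ [z]). (-1) ^ idx (M @ [z]) x * a x y * pfaff a (remove1 x (M @ [z])))"
    by (rule pfaff_last[OF d' _ sk]) (use ev in simp)
  also have "set (M @ [z]) = insert z (set M)" by simp
  also have "(\<Sum>x\<in>insert z (set M). (-1) ^ idx (M @ [z]) x * a x y * pfaff a (remove1 x (M @ [z])))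
     = (-1) ^ idx (M @ [z]) z * a z y * pfaff a (remove1 z (M @ [z]))
       + (\<Sum>x\<in>set M. (-1) ^ idx (M @ [z]) x * a x y * pfaff a (remove1 x (M @ [z])))"
    using zM by (simp add: sum.insert)
  also have "(\<Sum>x\<in>set M. (-1) ^ idx (M @ [z]) x * a x y * pfaff a (remove1 x (M @ [z])))
      = (\<Sum>x\<in>set M. (-1) ^ idx M x * a x y * pfaff a (remove1 x M @ [z]))"
    by (rule sum.cong[OF refl]) (simp add: idx_append remove1_append)
  also have "(-1) ^ idx (M @ [z]) z * a z y * pfaff a (remove1 z (M @ [z])) = a z y * pfaff a M"
    using zM ev by (simp add: idx_append remove1_append)
  finally show ?thesis by simp
qed

lemma skewD: "skew a \<Longrightarrow> a j i = - a i j"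
  unfolding skew_def by blast

lemma pfaff_odd_main:
  fixes A At :: "nat \<Rightarrow> nat \<Rightarrow> 'a::field_char_0" and u v :: "nat \<Rightarrow> 'a"
  assumes d: "distinct (M @ [z])" and od: "odd (length M)" and skA: "skew A" and skAt: "skew At"
    and hM: "\<And>i j. i \<in> set M \<Longrightarrow> j \<in> set M \<Longrightarrow> At i j = A i j + u i * v j - v i * u j"
    and hzt: "\<And>i. i \<in> set M \<Longrightarrow> At i z = u i"
    and hz: "\<And>i. i \<in> set M \<Longrightarrow> A i z = v i"
  shows "pfaff At (M @ [z]) + pfaff A (M @ [z])
    = (\<Sum>x\<in>set M. (-1) ^ idx M x * (u x + v x) * pfaff A (remove1 x M))"
proof -
  have zM: "z \<notin> set M" using d by simp
  define B where "B = (\<lambda>i j. A i j + (if j = z then u i - A i z else 0) - (if i = z then u j - A j z else 0))"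
  have skB: "skew B" unfolding skew_def
  proof (intro allI)
    fix i j show "B j i = - B i j" using skewD[OF skA, of i j] unfolding B_def by (simp add: algebra_simps)
  qed
  have Bzz: "B z z = 0" by (rule skew_diag[OF skB])
  have BM: "B i j = A i j" if "i \<in> set M" "j \<in> set M" for i j
    using that zM unfolding B_def by auto
  have Biz: "B i z = u i" if "i \<in> set M" for i
    using that zM unfolding B_def by auto
  have Bzj: "B z j = - u j" if "j \<in> set M" for j
    using Biz[OF that] skewD[OF skB, of z j] by (simp only:)
  have Atzj: "At z j = - u j" if "j \<in> set M" for j
    using hzt[OF that] skewD[OF skAt, of z j] by (simp only:)
  have Atzz: "At z z = 0" by (rule skew_diag[OF skAt])
  have "pfaff At (M @ [z]) = pfaff (rowops B z v (set M)) (M @ [z])"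
  proof (rule pfaff_cong)
    fix i j assume i: "i \<in> set (M @ [z])" and j: "j \<in> set (M @ [z])"
    show "At i j = rowops B z v (set M) i j"
    proof (cases "i = z")
      case True
      then show ?thesis
      proof (cases "j = z")
        case True with \<open>i = z\<close> show ?thesis using zM Bzz Atzz unfolding rowops_def by simp
      next
        case False
        then have "j \<in> set M" using j by simp
        then show ?thesis using \<open>i = z\<close> zM Bzz Atzj Bzj unfolding rowops_def by simp
      qed
    next
      case False
      then have iM: "i \<in> set M" using i by simp
      show ?thesis
      proof (cases "j = z")
        case True
        then show ?thesis using iM zM Bzz hzt Biz unfolding rowops_def by simp
      next
        case False
        then have "j \<in> set M" using j by simp
        then show ?thesis using iM zM hM BM Bzj unfolding rowops_def by (simp add: algebra_simps)
      qed
    qed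
  qed
  also have "\<dots> = pfaff B (M @ [z])"
    by (rule pfaff_rowops[OF d skB]) (use zM in auto)
  also have "\<dots> = (\<Sum>x\<in>set M. (-1) ^ idx M x * B x z * pfaff B (remove1 x M))"
    by (rule pfaff_last[OF d od skB])
  also have "\<dots> = (\<Sum>x\<in>set M. (-1) ^ idx M x * u x * pfaff A (remove1 x M))"
  proof (rule sum.cong[OF refl])
    fix x assume x: "x \<in> set M"
    have "pfaff B (remove1 x M) = pfaff A (remove1 x M)"
      by (rule pfaff_cong) (use set_remove1_subset[of x M] BM in auto)
    then show "(-1) ^ idx M x * B x z * pfaff B (remove1 x M) = (-1) ^ idx M x * u x * pfaff A (remove1 x M)"
      using Biz[OF x] by simp
  qed
  finally have 1: "pfaff At (M @ [z]) = (\<Sum>x\<in>set M. (-1) ^ idx M x * u x * pfaff A (remove1 x M))" .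
  have "pfaff A (M @ [z]) = (\<Sum>x\<in>set M. (-1) ^ idx M x * A x z * pfaff A (remove1 x M))"
    by (rule pfaff_last[OF d od skA])
  also have "\<dots> = (\<Sum>x\<in>set M. (-1) ^ idx M x * v x * pfaff A (remove1 x M))"
    by (rule sum.cong[OF refl]) (simp add: hz)
  finally have 2: "pfaff A (M @ [z]) = (\<Sum>x\<in>set M. (-1) ^ idx M x * v x * pfaff A (remove1 x M))" .
  show ?thesis unfolding 1 2 sum.distrib[symmetric] by (rule sum.cong[OF refl]) (simp add: algebra_simps)
qed

lemma pfaff_even_main:
  fixes A At :: "nat \<Rightarrow> nat \<Rightarrow> 'a::field_char_0" and u v :: "nat \<Rightarrow> 'a"
  assumes d: "distinct (M @ [z, y])" and ev: "even (length M)" and skA: "skew A" and skAt: "skew At"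
    and hM: "\<And>i j. i \<in> set M \<Longrightarrow> j \<in> set M \<Longrightarrow> At i j = A i j + u i * v j - v i * u j"
    and hz: "\<And>i. i \<in> set M \<Longrightarrow> A i z = v i"
  shows "pfaff At M - pfaff A M
    = (\<Sum>x\<in>set M. (-1) ^ idx M x * (u x + v x) * pfaff A (remove1 x M @ [z]))"
proof -
  have zM: "z \<notin> set M" and yM: "y \<notin> set M" and zy: "z \<noteq> y" using d by auto
  define L where "L = M @ [z, y]"
  have dL: "distinct L" using d unfolding L_def .
  define C where "C = (\<lambda>w i j. A i j + (if j = y then w i - A i y else 0) - (if i = y then w j - A j y else 0))"
  have skC: "skew (C w)" for w unfolding skew_def
  proof (intro allI)
    fix i j show "C w j i = - C w i j" using skewD[OF skA, of i j] unfolding C_def by (simp add: algebra_simps)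
  qed
  have Ciy: "C w i y = w i" if "i \<noteq> y" for w i using that unfolding C_def by simp
  have Cyj: "C w y j = - w j" if "j \<noteq> y" for w j using that skewD[OF skA, of y j] unfolding C_def by simp
  have Cij: "C w i j = A i j" if "i \<noteq> y" "j \<noteq> y" for w i j using that unfolding C_def by simp
  have CA: "pfaff (C w) (remove1 x M @ [z]) = pfaff A (remove1 x M @ [z])" for w x
  proof (rule pfaff_cong)
    fix i j assume "i \<in> set (remove1 x M @ [z])" "j \<in> set (remove1 x M @ [z])"
    then have "i \<noteq> y" "j \<noteq> y" using set_remove1_subset[of x M] yM zy by auto
    then show "C w i j = A i j" by (rule Cij)
  qed
  have CAM: "pfaff (C w) M = pfaff A M" for w
  proof (rule pfaff_cong)
    fix i j assume "i \<in> set M" "j \<in> set M"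
    then have "i \<noteq> y" "j \<noteq> y" using yM by auto
    then show "C w i j = A i j" by (rule Cij)
  qed
  have G: "pfaff (C w) L = (\<Sum>x\<in>set M. (-1) ^ idx M x * w x * pfaff A (remove1 x M @ [z])) + w z * pfaff A M" for w
  proof -
    have "pfaff (C w) L = (\<Sum>x\<in>set M. (-1) ^ idx M x * C w x y * pfaff (C w) (remove1 x M @ [z])) + C w z y * pfaff (C w) M"
      unfolding L_def by (rule pfaff_last2[OF d ev skC])
    also have "\<dots> = (\<Sum>x\<in>set M. (-1) ^ idx M x * w x * pfaff A (remove1 x M @ [z])) + w z * pfaff A M"
    proof -
      have "C w x y = w x" if "x \<in> set M" for x
        using that yM by (intro Ciy) auto
      then show ?thesis unfolding CA CAM using Ciy[OF zy] by (simp cong: sum.cong)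
    qed
    finally show ?thesis .
  qed
  define wv where "wv = (\<lambda>i. if i = z then 0 else v i)"
  have Gv: "pfaff (C wv) L = 0"
  proof (rule pfaff_eq_rows[OF dL skC, of z y])
    show "z \<in> set L" "y \<in> set L" "z \<noteq> y" using zy unfolding L_def by auto
    fix j assume j: "j \<in> set L"
    consider "j \<in> set M" | "j = z" | "j = y" using j unfolding L_def by auto
    then show "C wv z j = C wv y j"
    proof cases
      case 1
      then have "j \<noteq> y" "j \<noteq> z" using yM zM by auto
      then show ?thesis using Cyj[where w=wv and j=j] Cij[where w=wv and i=z and j=j] zy skewD[OF skA, of z j] hz[OF 1] unfolding wv_def by simp
    next
      case 2
      then show ?thesis using Cyj[where w=wv and j=z] Cij[where w=wv and i=z and j=z] zy skew_diag[OF skA, of z] unfolding wv_def by simp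
    next
      case 3
      then show ?thesis using Ciy[where w=wv and i=z] skew_diag[OF skC[of wv], of y] zy unfolding wv_def by simp
    qed
  qed
  define wD where "wD = (\<lambda>i. if i = z then 1 else u i)"
  define D1 where "D1 = rowops (C wD) z (\<lambda>i. - u i) (set M)"
  define D2 where "D2 = rowops D1 y v (set M)"
  have skD1: "skew D1" unfolding D1_def by (rule skew_rowops[OF skC])
  have skD2: "skew D2" unfolding D2_def by (rule skew_rowops[OF skD1])
  have "pfaff D2 L = pfaff D1 L"
    unfolding D2_def by (rule pfaff_rowops[OF dL skD1]) (use yM in \<open>auto simp: L_def\<close>)
  also have "\<dots> = pfaff (C wD) L"
    unfolding D1_def by (rule pfaff_rowops[OF dL skC]) (use zM in \<open>auto simp: L_def\<close>)
  finally have D21: "pfaff D2 L = pfaff (C wD) L" .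
  have CDzy: "C wD z y = 1" using Ciy[where w=wD and i=z] zy unfolding wD_def by simp
  have CDzz: "C wD z z = 0" by (rule skew_diag[OF skC])
  have CDzj: "C wD z j = - v j" if "j \<in> set M" for j
    using that Cij[where w=wD and i=z and j=j] zy yM skewD[OF skA, of z j] hz[OF that] by auto
  have CDyj: "C wD y j = - u j" if "j \<in> set M" for j
  proof -
    have "j \<noteq> y" "j \<noteq> z" using that yM zM by auto
    then show ?thesis using Cyj[where w=wD and j=j] unfolding wD_def by simp
  qed
  have CDxy: "C wD x y = u x" if "x \<in> set M" for x
  proof -
    have "x \<noteq> y" "x \<noteq> z" using that yM zM by auto
    then show ?thesis using Ciy[where w=wD and i=x] unfolding wD_def by simp
  qed
  have D1xy: "D1 x y = 0" if "x \<in> set M" for x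
    using that yM CDxy CDzy unfolding D1_def rowops_def by simp
  have D1yj: "D1 y j = 0" if "j \<in> set M" for j
    using that yM CDyj CDzy unfolding D1_def rowops_def by simp
  have D1yy: "D1 y y = 0" by (rule skew_diag[OF skD1])
  have D1M: "D1 i j = At i j" if "i \<in> set M" "j \<in> set M" for i j
    using that yM hM[OF that] CDzj Cij[where w=wD and i=i and j=j] unfolding D1_def rowops_def by (auto simp: algebra_simps)
  have D1zy: "D1 z y = 1" using zM yM CDzy unfolding D1_def rowops_def by simp
  have D2xy: "D2 x y = 0" if "x \<in> set M" for x
    using that yM D1xy D1yy unfolding D2_def rowops_def by simp
  have D2zy: "D2 z y = 1" using zM yM D1zy unfolding D2_def rowops_def by simp
  have D2M: "D2 i j = At i j" if "i \<in> set M" "j \<in> set M" for i j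
    using that D1M D1yj unfolding D2_def rowops_def by simp
  have "pfaff D2 L = (\<Sum>x\<in>set M. (-1) ^ idx M x * D2 x y * pfaff D2 (remove1 x M @ [z])) + D2 z y * pfaff D2 M"
    unfolding L_def by (rule pfaff_last2[OF d ev skD2])
  also have "\<dots> = pfaff At M"
  proof -
    have "pfaff D2 M = pfaff At M" by (rule pfaff_cong) (simp add: D2M)
    then show ?thesis using D2xy D2zy by simp
  qed
  finally have GD: "pfaff (C wD) L = pfaff At M" using D21 by simp
  have "pfaff At M - pfaff A M = (pfaff (C wD) L - pfaff A M) + pfaff (C wv) L"
    using GD Gv by simp
  also have "\<dots> = (\<Sum>x\<in>set M. (-1) ^ idx M x * (u x + v x) * pfaff A (remove1 x M @ [z]))"
  proof -
    have "(\<Sum>x\<in>set M. (-1) ^ idx M x * wD x * pfaff A (remove1 x M @ [z])) + (\<Sum>x\<in>set M. (-1) ^ idx M x * wv x * pfaff A (remove1 x M @ [z]))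
      = (\<Sum>x\<in>set M. (-1) ^ idx M x * (u x + v x) * pfaff A (remove1 x M @ [z]))"
      unfolding sum.distrib[symmetric]
      by (rule sum.cong[OF refl]) (use zM in \<open>auto simp: wD_def wv_def algebra_simps\<close>)
    then show ?thesis unfolding G by (simp add: wD_def wv_def)
  qed
  finally show ?thesis .
qed

lemma subsets_Suc_split:
  fixes n k :: nat
  shows "{S. S \<subseteq> {..<Suc n} \<and> card S = Suc k} =
     (\<lambda>T. Suc ` T) ` {T. T \<subseteq> {..<n} \<and> card T = Suc k} \<union> (\<lambda>T. insert 0 (Suc ` T)) ` {T. T \<subseteq> {..<n} \<and> card T = k}"
proof (intro equalityI subsetI)
  fix S assume S: "S \<in> {S. S \<subseteq> {..<Suc n} \<and> card S = Suc k}"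
  define T where "T = {j. Suc j \<in> S}"
  have TS: "Suc ` T = S - {0}" unfolding T_def by (auto simp: image_iff) (metis not0_implies_Suc)
  have Tsub: "T \<subseteq> {..<n}" using S unfolding T_def by auto
  have cT: "card T = card (S - {0})" using TS card_image[of Suc T] by simp
  have finS: "finite S" using S finite_subset by auto
  show "S \<in> (\<lambda>T. Suc ` T) ` {T. T \<subseteq> {..<n} \<and> card T = Suc k} \<union> (\<lambda>T. insert 0 (Suc ` T)) ` {T. T \<subseteq> {..<n} \<and> card T = k}"
  proof (cases "0 \<in> S")
    case True
    then have "S = insert 0 (Suc ` T)" using TS by auto
    moreover have "card T = k" using cT True S finS by (simp add: card_Diff_singleton)
    ultimately show ?thesis using Tsub by blast
  next
    case False
    then have "S = Suc ` T" using TS by auto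
    moreover have "card T = Suc k" using cT False S by simp
    ultimately show ?thesis using Tsub by blast
  qed
next
  fix S assume "S \<in> (\<lambda>T. Suc ` T) ` {T. T \<subseteq> {..<n} \<and> card T = Suc k} \<union> (\<lambda>T. insert 0 (Suc ` T)) ` {T. T \<subseteq> {..<n} \<and> card T = k}"
  then show "S \<in> {S. S \<subseteq> {..<Suc n} \<and> card S = Suc k}"
  proof
    assume "S \<in> (\<lambda>T. Suc ` T) ` {T. T \<subseteq> {..<n} \<and> card T = Suc k}"
    then obtain T where "S = Suc ` T" "T \<subseteq> {..<n}" "card T = Suc k" by auto
    then show ?thesis by (auto simp: card_image)
  next
    assume "S \<in> (\<lambda>T. insert 0 (Suc ` T)) ` {T. T \<subseteq> {..<n} \<and> card T = k}"
    then obtain T where S: "S = insert 0 (Suc ` T)" "T \<subseteq> {..<n}" "card T = k" by auto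
    have "finite T" using S(2) finite_subset by auto
    then show ?thesis using S by (auto simp: card_image card_insert_if)
  qed
qed

lemma esym_Cons:
  fixes x :: "'a::comm_ring_1"
  shows "esym (Suc k) (x # t) = esym (Suc k) t + x * esym k t"
proof -
  let ?n = "length t"
  let ?F = "\<lambda>m. {T. T \<subseteq> {..<?n} \<and> card T = m}"
  have fin: "finite (?F m)" for m
    by (rule finite_subset[of _ "Pow {..<?n}"]) auto
  have inj1: "inj_on (\<lambda>T. Suc ` T) (?F m)" for m
    by (rule inj_onI) (simp add: inj_image_eq_iff)
  have inj2: "inj_on (\<lambda>T. insert 0 (Suc ` T)) (?F m)" for m
  proof (rule inj_onI)
    fix A B assume "insert 0 (Suc ` A) = insert 0 (Suc ` B)"
    then have "Suc ` A = Suc ` B" by (metis Diff_insert_absorb imageE nat.distinct(1))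
    then show "A = B" by (simp add: inj_image_eq_iff)
  qed
  have disj: "(\<lambda>T. Suc ` T) ` ?F (Suc k) \<inter> (\<lambda>T. insert 0 (Suc ` T)) ` ?F k = {}" by auto
  have "esym (Suc k) (x # t) = (\<Sum>S\<in>(\<lambda>T. Suc ` T) ` ?F (Suc k) \<union> (\<lambda>T. insert 0 (Suc ` T)) ` ?F k. \<Prod>i\<in>S. (x # t) ! i)"
    unfolding esym_def using subsets_Suc_split[of ?n k] by simp
  also have "\<dots> = (\<Sum>S\<in>(\<lambda>T. Suc ` T) ` ?F (Suc k). \<Prod>i\<in>S. (x # t) ! i) + (\<Sum>S\<in>(\<lambda>T. insert 0 (Suc ` T)) ` ?F k. \<Prod>i\<in>S. (x # t) ! i)"
    by (rule sum.union_disjoint) (use fin disj in auto)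
  also have "(\<Sum>S\<in>(\<lambda>T. Suc ` T) ` ?F (Suc k). \<Prod>i\<in>S. (x # t) ! i) = (\<Sum>T\<in>?F (Suc k). \<Prod>i\<in>Suc ` T. (x # t) ! i)"
    by (rule sum.reindex[OF inj1, unfolded comp_def])
  also have "\<dots> = esym (Suc k) t"
    unfolding esym_def by (rule sum.cong[OF refl]) (simp add: prod.reindex)
  also have "(\<Sum>S\<in>(\<lambda>T. insert 0 (Suc ` T)) ` ?F k. \<Prod>i\<in>S. (x # t) ! i) = (\<Sum>T\<in>?F k. \<Prod>i\<in>insert 0 (Suc ` T). (x # t) ! i)"
    by (rule sum.reindex[OF inj2, unfolded comp_def])
  also have "\<dots> = x * esym k t"
    unfolding esym_def sum_distrib_left
  proof (rule sum.cong[OF refl])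
    fix T assume T: "T \<in> ?F k"
    then have "finite T" using finite_subset by auto
    then show "(\<Prod>i\<in>insert 0 (Suc ` T). (x # t) ! i) = x * (\<Prod>i\<in>T. t ! i)"
      by (simp add: prod.insert prod.reindex image_iff)
  qed
  finally show ?thesis .
qed

lemma esym_0: "esym 0 xs = 1"
proof -
  have "{S. S \<subseteq> {..<length xs} \<and> card S = 0} = {{}}"
  proof (intro equalityI subsetI)
    fix S assume "S \<in> {S. S \<subseteq> {..<length xs} \<and> card S = 0}"
    then have "S \<subseteq> {..<length xs}" "card S = 0" by auto
    moreover have "finite S" using calculation(1) finite_subset by blast
    ultimately show "S \<in> {{}}" by simp
  qed auto
  then show ?thesis unfolding esym_def by simp
qed

lemma Pt1_pos: "0 < m \<Longrightarrow> Pt1 m (x # t) = (esym m t + x * esym (m - 1) t) / 2"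
  by (cases m) (simp_all add: Pt1_def esym_Cons)

lemma Pt1_pos_neg: "0 < m \<Longrightarrow> Pt1 m ((- x) # t) = (esym m t - x * esym (m - 1) t) / 2"
  by (cases m) (simp_all add: Pt1_def esym_Cons)

lemma Pt1_prod_diff:
  fixes x :: "'a::field_char_0"
  assumes "0 < m1" "0 < m2"
  shows "Pt1 m1 ((- x) # t) * Pt1 m2 ((- x) # t) - Pt1 m1 (x # t) * Pt1 m2 (x # t)
    = - (x / 2) * (esym m1 t * esym (m2 - 1) t + esym (m1 - 1) t * esym m2 t)"
  unfolding Pt1_pos[OF assms(1)] Pt1_pos[OF assms(2)] Pt1_pos_neg[OF assms(1)] Pt1_pos_neg[OF assms(2)]
  by (simp add: field_simps)

lemma telescope_alt:
  fixes g :: "nat \<Rightarrow> 'a::comm_ring_1"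
  shows "(\<Sum>k\<in>{1..<Suc j'}. (-1) ^ k * (g k + g (k - 1))) = (-1) ^ j' * g j' - g 0"
proof (induction j')
  case 0 then show ?case by simp
next
  case (Suc j')
  have "(\<Sum>k\<in>{1..<Suc (Suc j')}. (-1) ^ k * (g k + g (k - 1)))
      = (\<Sum>k\<in>{1..<Suc j'}. (-1) ^ k * (g k + g (k - 1))) + (-1) ^ Suc j' * (g (Suc j') + g j')"
    by simp
  also have "\<dots> = (-1) ^ Suc j' * g (Suc j') - g 0"
    unfolding Suc.IH by (simp add: algebra_simps)
  finally show ?case .
qed

lemma Pt2_diff:
  fixes x :: "'a::field_char_0"
  assumes i: "0 < i"
  shows "Pt2 i j ((- x) # t) - Pt2 i j (x # t)
    = Pt1 i ((- x) # t) * Pt1 j (x # t) - Pt1 i (x # t) * Pt1 j ((- x) # t)"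
proof (cases j)
  case 0
  then show ?thesis by (simp add: Pt2_def Pt1_def)
next
  case (Suc j')
  let ?e = "\<lambda>m. esym m t"
  let ?X = "x # t" and ?Y = "(- x) # t"
  define g where "g = (\<lambda>k. ?e (i + k) * ?e (j' - k))"
  have sumdiff: "(\<Sum>k\<in>{1..<j}. (-1) ^ k * Pt1 (i + k) ?Y * Pt1 (j - k) ?Y)
      - (\<Sum>k\<in>{1..<j}. (-1) ^ k * Pt1 (i + k) ?X * Pt1 (j - k) ?X)
      = - (x / 2) * (\<Sum>k\<in>{1..<Suc j'}. (-1) ^ k * (g k + g (k - 1)))"
    unfolding sum_subtractf[symmetric] sum_distrib_left Suc
  proof (rule sum.cong[OF refl])
    fix k assume k: "k \<in> {1..<Suc j'}"
    have "Pt1 (i + k) ?Y * Pt1 (Suc j' - k) ?Y - Pt1 (i + k) ?X * Pt1 (Suc j' - k) ?X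
        = - (x / 2) * (?e (i + k) * ?e (Suc j' - k - 1) + ?e (i + k - 1) * ?e (Suc j' - k))"
      by (rule Pt1_prod_diff) (use i k in auto)
    moreover have "g k = ?e (i + k) * ?e (Suc j' - k - 1)" unfolding g_def by simp
    moreover have "g (k - 1) = ?e (i + k - 1) * ?e (Suc j' - k)"
      unfolding g_def using k i by (simp add: Suc_diff_le)
    ultimately have D: "Pt1 (i + k) ?Y * Pt1 (Suc j' - k) ?Y - Pt1 (i + k) ?X * Pt1 (Suc j' - k) ?X
        = - (x / 2) * (g k + g (k - 1))" by simp
    have "(-1) ^ k * Pt1 (i + k) ?Y * Pt1 (Suc j' - k) ?Y - (-1) ^ k * Pt1 (i + k) ?X * Pt1 (Suc j' - k) ?X
       = (-1) ^ k * (Pt1 (i + k) ?Y * Pt1 (Suc j' - k) ?Y - Pt1 (i + k) ?X * Pt1 (Suc j' - k) ?X)"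
      by (simp add: algebra_simps)
    then show "(-1) ^ k * Pt1 (i + k) ?Y * Pt1 (Suc j' - k) ?Y - (-1) ^ k * Pt1 (i + k) ?X * Pt1 (Suc j' - k) ?X
        = - (x / 2) * ((-1) ^ k * (g k + g (k - 1)))"
      unfolding D by (simp add: algebra_simps)
  qed
  have g0: "g 0 = ?e i * ?e j'" unfolding g_def by simp
  have gj: "g j' = ?e (i + j')" unfolding g_def by (simp add: esym_0)
  have pj: "0 < j" using Suc by simp
  have ij: "0 < i + j" using i by simp
  have main: "Pt1 i ?Y * Pt1 j ?Y - Pt1 i ?X * Pt1 j ?X = - (x / 2) * (?e i * ?e j' + ?e (i - 1) * ?e j)"
    using Pt1_prod_diff[OF i pj, of x t] Suc by simp
  have last: "Pt1 (i + j) ?Y - Pt1 (i + j) ?X = - x * ?e (i + j')"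
    unfolding Pt1_pos[OF ij] Pt1_pos_neg[OF ij] using Suc by (simp add: field_simps)
  have "Pt2 i j ?Y - Pt2 i j ?X
      = (Pt1 i ?Y * Pt1 j ?Y - Pt1 i ?X * Pt1 j ?X)
        + 2 * ((\<Sum>k\<in>{1..<j}. (-1) ^ k * Pt1 (i + k) ?Y * Pt1 (j - k) ?Y)
      - (\<Sum>k\<in>{1..<j}. (-1) ^ k * Pt1 (i + k) ?X * Pt1 (j - k) ?X))
        + (-1) ^ j * (Pt1 (i + j) ?Y - Pt1 (i + j) ?X)"
    using Suc by (simp add: Pt2_def algebra_simps)
  also have "\<dots> = - (x / 2) * (?e i * ?e j' + ?e (i - 1) * ?e j)
      + 2 * (- (x / 2) * ((-1) ^ j' * ?e (i + j') - ?e i * ?e j'))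
      + (-1) ^ j * (- x * ?e (i + j'))"
    unfolding main sumdiff last telescope_alt g0 gj ..
  also have "\<dots> = (x / 2) * (?e i * ?e j' - ?e (i - 1) * ?e j)"
    using Suc by (simp add: field_simps)
  also have "\<dots> = Pt1 i ?Y * Pt1 j ?X - Pt1 i ?X * Pt1 j ?Y"
    unfolding Pt1_pos[OF i] Pt1_pos_neg[OF i] Pt1_pos[OF pj] Pt1_pos_neg[OF pj] using Suc
    by (simp add: field_simps)
  finally show ?thesis .
qed

definition sk :: "(nat \<Rightarrow> nat \<Rightarrow> 'a::comm_ring_1) \<Rightarrow> nat \<Rightarrow> nat \<Rightarrow> 'a" where
  "sk g i j = (if i < j then g i j else if j < i then - g j i else 0)"

lemma skew_sk: "skew (sk g)"
  unfolding skew_def sk_def by auto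

lemma sorted_wrt_del: "sorted_wrt R xs \<Longrightarrow> sorted_wrt R (take k xs @ drop (Suc k) xs)"
proof -
  assume s: "sorted_wrt R xs"
  have s2: "sorted_wrt R (take k xs @ drop k xs)" using s by simp
  show ?thesis unfolding sorted_wrt_append
  proof (intro conjI)
    show "sorted_wrt R (take k xs)" using s2 unfolding sorted_wrt_append by blast
    show "sorted_wrt R (drop (Suc k) xs)" using s by (rule sorted_wrt_drop)
    show "\<forall>x\<in>set (take k xs). \<forall>y\<in>set (drop (Suc k) xs). R x y"
      using s2 set_drop_subset_set_drop[of k "Suc k" xs] unfolding sorted_wrt_append by auto
  qed
qed

lemma pfaff_cong_ord:
  "sorted_wrt (<) L \<Longrightarrow> (\<And>x y. x \<in> set L \<Longrightarrow> y \<in> set L \<Longrightarrow> x < y \<Longrightarrow> a x y = b x y) \<Longrightarrow> pfaff a L = pfaff b L"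
proof (induction a L rule: pfaff.induct)
  case (1 a) then show ?case by simp
next
  case (2 a i "is")
  have A: "pfaff a (take k is @ drop (Suc k) is) = pfaff b (take k is @ drop (Suc k) is)" if "k < length is" for k
  proof (rule 2(1))
    show "k \<in> {..<length is}" using that by simp
    show "sorted_wrt (<) (take k is @ drop (Suc k) is)"
      by (rule sorted_wrt_del) (use 2(2) in simp)
    fix x y assume "x \<in> set (take k is @ drop (Suc k) is)" "y \<in> set (take k is @ drop (Suc k) is)" "x < y"
    then show "a x y = b x y" using 2(3) set_del_subset[of k "is"] by auto
  qed
  have B: "a i (is ! k) = b i (is ! k)" if "k < length is" for k
    using 2(2,3) that by simp
  show ?case
    unfolding pfaff.simps
    by (rule sum.cong[OF refl]) (simp add: A B)
qed

lemma pfaff_sk: "sorted_wrt (<) L \<Longrightarrow> pfaff (sk g) L = pfaff g L"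
  by (rule pfaff_cong_ord) (auto simp: sk_def)

lemma Ptl_idx:
  assumes "map (\<lambda>p. vals ! p) N = mu"
  shows "pfaff (\<lambda>i j. Pt2 (mu ! i) (mu ! j) ys) [0..<length mu] = pfaff (\<lambda>i j. Pt2 (vals ! i) (vals ! j) ys) N"
proof -
  have "pfaff (\<lambda>i j. Pt2 (vals ! i) (vals ! j) ys) N = pfaff (\<lambda>i j. Pt2 (vals ! i) (vals ! j) ys) (map (\<lambda>p. N ! p) [0..<length N])"
    by (simp add: map_nth)
  also have "\<dots> = pfaff (\<lambda>i j. Pt2 (vals ! (N ! i)) (vals ! (N ! j)) ys) [0..<length N]"
    by (rule pfaff_map)
  also have "\<dots> = pfaff (\<lambda>i j. Pt2 (mu ! i) (mu ! j) ys) [0..<length mu]"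
    using assms[symmetric] by (auto intro!: pfaff_cong)
  finally show ?thesis by simp
qed

lemma sorted_remove1_upt: "sorted_wrt (<) (remove1 k [0..<l])"
proof -
  have "sorted_wrt (<) [0..<l]" by simp
  then have "sorted_wrt (<) (take k [0..<l] @ drop (Suc k) [0..<l])" by (rule sorted_wrt_del)
  moreover have "k < l \<Longrightarrow> take k [0..<l] @ drop (Suc k) [0..<l] = remove1 k [0..<l]"
    using del_remove1[of "[0..<l]" k] by simp
  moreover have "\<not> k < l \<Longrightarrow> remove1 k [0..<l] = [0..<l]" by (simp add: remove1_idem)
  ultimately show ?thesis by (cases "k < l") auto
qed

lemma idx_upt: "k < l \<Longrightarrow> idx [0..<l] k = k"
  using idx_nth[of "[0..<l]" k] by simp

theorem proposition7:
  fixes xs :: "'a::field_char_0 list" and n :: nat and lam :: "nat list"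
  assumes "length xs = n" and "in_E n lam" and "length lam \<ge> 1"
  shows "(\<Sum>i=1..length lam. (-1) ^ (i - 1) * Ptl (remove_part lam i) xs
            * esym (lam ! (i - 1)) (tl xs))
         = Ptl lam ((- hd xs) # tl xs) + (-1) ^ (length lam + 1) * Ptl lam xs"
proof -
  define l where "l = length lam"
  have l1: "1 \<le> l" using assms(3) unfolding l_def .
  have pos: "0 < lam ! p" if "p < l" for p
  proof -
    have "lam ! p \<in> set lam" using that unfolding l_def by (rule nth_mem)
    then show ?thesis using assms(2) unfolding in_E_def by blast
  qed
  have "0 < length lam" using l1 unfolding l_def by linarith
  then have "lam ! 0 \<in> set lam" by (rule nth_mem)
  then have "lam ! 0 \<le> n" using assms(2) unfolding in_E_def by blast
  then have "xs \<noteq> []" using pos[of 0] l1 assms(1) by auto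
  then obtain x t where xs: "xs = x # t" by (cases xs) auto
  define X where "X = x # t"
  define Y where "Y = (- x) # t"
  define M where "M = [0..<l]"
  define vals where "vals = lam @ [0]"
  define fX where "fX = (\<lambda>i j. Pt2 (vals ! i) (vals ! j) X)"
  define fY where "fY = (\<lambda>i j. Pt2 (vals ! i) (vals ! j) Y)"
  define A where "A = sk fX"
  define At where "At = sk fY"
  define u where "u = (\<lambda>p. Pt1 (vals ! p) Y)"
  define v where "v = (\<lambda>p. Pt1 (vals ! p) X)"
  have vals_lt: "vals ! p = lam ! p" if "p < l" for p
    using that unfolding vals_def l_def by (simp add: nth_append)
  have vals_l: "vals ! l = 0" unfolding vals_def l_def by simp
  have mapM: "map (\<lambda>p. vals ! p) M = lam"
    unfolding M_def by (rule nth_equalityI) (simp_all add: vals_lt l_def)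
  have setM: "set M = {..<l}" unfolding M_def by auto
  have skA: "skew A" and skAt: "skew At" unfolding A_def At_def by (rule skew_sk)+
  have hM: "At i j = A i j + u i * v j - v i * u j" if "i \<in> set M" "j \<in> set M" for i j
  proof -
    have il: "i < l" and jl: "j < l" using that setM by auto
    have d: "fY p q - fX p q = u p * v q - v p * u q" if "p < l" for p q
      unfolding fX_def fY_def u_def v_def X_def Y_def
      by (rule Pt2_diff) (simp add: vals_lt[OF that] pos[OF that])
    consider "i < j" | "j < i" | "i = j" by arith
    then show ?thesis
    proof cases
      case 1 then show ?thesis using d[OF il, of j] unfolding A_def At_def sk_def by (simp add: algebra_simps)
    next
      case 2 then show ?thesis using d[OF jl, of i] unfolding A_def At_def sk_def by (simp add: algebra_simps)
    next
      case 3 then show ?thesis unfolding A_def At_def sk_def by simp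
    qed
  qed
  have hzt: "At i l = u i" if "i \<in> set M" for i
    using that setM vals_l unfolding At_def sk_def fY_def u_def by (simp add: Pt2_def)
  have hz: "A i l = v i" if "i \<in> set M" for i
    using that setM vals_l unfolding A_def sk_def fX_def v_def by (simp add: Pt2_def)
  have esum: "esym (lam ! k) t = u k + v k" if "k < l" for k
  proof -
    have "u k + v k = (esym (lam ! k) t - x * esym (lam ! k - 1) t) / 2 + (esym (lam ! k) t + x * esym (lam ! k - 1) t) / 2"
      unfolding u_def v_def X_def Y_def vals_lt[OF that] Pt1_pos[OF pos[OF that]] Pt1_pos_neg[OF pos[OF that]] by simp
    also have "\<dots> = esym (lam ! k) t" by (simp add: field_simps)
    finally show ?thesis by simp
  qed
  have rp: "remove_part lam (Suc k) = map (\<lambda>p. vals ! p) (remove1 k M)" if "k < l" for k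
  proof -
    have "remove1 k M = take k M @ drop (Suc k) M"
      using del_remove1[of M k] that unfolding M_def by simp
    then have "map (\<lambda>p. vals ! p) (remove1 k M) = map (\<lambda>p. vals ! p) (take k M @ drop (Suc k) M)" by simp
    also have "\<dots> = take k (map (\<lambda>p. vals ! p) M) @ drop (Suc k) (map (\<lambda>p. vals ! p) M)"
      by (simp only: map_append take_map drop_map)
    also have "\<dots> = take k lam @ drop (Suc k) lam" by (simp only: mapM)
    finally show ?thesis unfolding remove_part_def by simp
  qed
  have "(\<Sum>i=1..length lam. (-1) ^ (i - 1) * Ptl (remove_part lam i) xs * esym (lam ! (i - 1)) (tl xs))
      = (\<Sum>k<l. (-1) ^ k * Ptl (remove_part lam (Suc k)) X * esym (lam ! k) t)"
    unfolding l_def using sum.atLeast1_atMost_eq[of "\<lambda>i. (-1) ^ (i - 1) * Ptl (remove_part lam i) xs * esym (lam ! (i - 1)) (tl xs)" "length lam"]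
    by (simp add: xs X_def)
  also have "\<dots> = (\<Sum>k\<in>set M. (-1) ^ idx M k * (u k + v k) * Ptl (remove_part lam (Suc k)) X)"
    unfolding setM
    by (rule sum.cong[OF refl]) (simp add: esum idx_upt M_def algebra_simps)
  finally have LHS: "(\<Sum>i=1..length lam. (-1) ^ (i - 1) * Ptl (remove_part lam i) xs * esym (lam ! (i - 1)) (tl xs))
      = (\<Sum>k\<in>set M. (-1) ^ idx M k * (u k + v k) * Ptl (remove_part lam (Suc k)) X)" .
  have sM: "sorted_wrt (<) M" unfolding M_def by simp
  show ?thesis
  proof (cases "odd l")
    case True
    have PtlL: "Ptl lam ys = pfaff (sk (\<lambda>i j. Pt2 (vals ! i) (vals ! j) ys)) (M @ [l])" for ys :: "'a list"
    proof -
      have e: "map (\<lambda>p. vals ! p) (M @ [l]) = lam @ [0]" using mapM vals_l by simp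
      have o: "odd (length lam)" using True unfolding l_def .
      have "Ptl lam ys = pfaff (\<lambda>i j. Pt2 ((lam @ [0]) ! i) ((lam @ [0]) ! j) ys) [0..<length (lam @ [0])]"
        unfolding Ptl_def Let_def if_P[OF o] ..
      also have "\<dots> = pfaff (\<lambda>i j. Pt2 (vals ! i) (vals ! j) ys) (M @ [l])"
        by (rule Ptl_idx[OF e])
      also have "\<dots> = pfaff (sk (\<lambda>i j. Pt2 (vals ! i) (vals ! j) ys)) (M @ [l])"
        by (rule pfaff_sk[symmetric]) (simp add: M_def sorted_wrt_append)
      finally show ?thesis .
    qed
    have PR: "Ptl (remove_part lam (Suc k)) X = pfaff A (remove1 k M)" if "k \<in> set M" for k
    proof -
      have kl: "k < l" using that setM by auto
      have len: "even (length (remove_part lam (Suc k)))"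
        using True kl unfolding remove_part_def l_def by auto
      have o: "\<not> odd (length (remove_part lam (Suc k)))" using len by simp
      have "Ptl (remove_part lam (Suc k)) X = pfaff (\<lambda>i j. Pt2 (remove_part lam (Suc k) ! i) (remove_part lam (Suc k) ! j) X) [0..<length (remove_part lam (Suc k))]"
        unfolding Ptl_def Let_def if_not_P[OF o] ..
      also have "\<dots> = pfaff fX (remove1 k M)"
        unfolding fX_def by (rule Ptl_idx[OF rp[OF kl, symmetric]])
      also have "\<dots> = pfaff A (remove1 k M)"
        unfolding A_def M_def by (rule pfaff_sk[symmetric]) (rule sorted_remove1_upt)
      finally show ?thesis .
    qed
    have main: "pfaff At (M @ [l]) + pfaff A (M @ [l]) = (\<Sum>x\<in>set M. (-1) ^ idx M x * (u x + v x) * pfaff A (remove1 x M))"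
      by (rule pfaff_odd_main[OF _ _ skA skAt hM hzt hz]) (use True in \<open>simp_all add: M_def l_def\<close>)
    have "(\<Sum>k\<in>set M. (-1) ^ idx M k * (u k + v k) * Ptl (remove_part lam (Suc k)) X)
        = (\<Sum>k\<in>set M. (-1) ^ idx M k * (u k + v k) * pfaff A (remove1 k M))"
      by (rule sum.cong[OF refl]) (simp add: PR)
    also have "\<dots> = pfaff At (M @ [l]) + pfaff A (M @ [l])" using main by simp
    also have "pfaff At (M @ [l]) = Ptl lam ((- hd xs) # tl xs)"
      unfolding PtlL At_def fY_def Y_def xs by simp
    also have "pfaff A (M @ [l]) = (-1) ^ (length lam + 1) * Ptl lam xs"
      unfolding PtlL A_def fX_def X_def xs using True by (simp add: l_def)
    finally show ?thesis unfolding LHS .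
  next
    case False
    have PtlL: "Ptl lam ys = pfaff (sk (\<lambda>i j. Pt2 (vals ! i) (vals ! j) ys)) M" for ys :: "'a list"
    proof -
      have o: "\<not> odd (length lam)" using False unfolding l_def .
      have "Ptl lam ys = pfaff (\<lambda>i j. Pt2 (lam ! i) (lam ! j) ys) [0..<length lam]"
        unfolding Ptl_def Let_def if_not_P[OF o] ..
      also have "\<dots> = pfaff (\<lambda>i j. Pt2 (vals ! i) (vals ! j) ys) M"
        by (rule Ptl_idx[OF mapM])
      also have "\<dots> = pfaff (sk (\<lambda>i j. Pt2 (vals ! i) (vals ! j) ys)) M"
        by (rule pfaff_sk[symmetric]) (rule sM)
      finally show ?thesis .
    qed
    have PR: "Ptl (remove_part lam (Suc k)) X = pfaff A (remove1 k M @ [l])" if "k \<in> set M" for k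
    proof -
      have kl: "k < l" using that setM by auto
      have len: "odd (length (remove_part lam (Suc k)))"
        using False kl l1 unfolding remove_part_def l_def by auto
      have "map (\<lambda>p. vals ! p) (remove1 k M @ [l]) = remove_part lam (Suc k) @ [0]"
        using rp[OF kl] vals_l by simp
      then have e: "map (\<lambda>p. vals ! p) (remove1 k M @ [l]) = remove_part lam (Suc k) @ [0]" .
      have "Ptl (remove_part lam (Suc k)) X = pfaff (\<lambda>i j. Pt2 ((remove_part lam (Suc k) @ [0]) ! i) ((remove_part lam (Suc k) @ [0]) ! j) X) [0..<length (remove_part lam (Suc k) @ [0])]"
        unfolding Ptl_def Let_def if_P[OF len] ..
      also have "\<dots> = pfaff fX (remove1 k M @ [l])"
        unfolding fX_def by (rule Ptl_idx[OF e])
      also have "\<dots> = pfaff A (remove1 k M @ [l])"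
        unfolding A_def
      proof (rule pfaff_sk[symmetric])
        have "set (remove1 k M) \<subseteq> {..<l}" using set_remove1_subset[of k M] setM by auto
        then show "sorted_wrt (<) (remove1 k M @ [l])"
          using sorted_remove1_upt[of k l] unfolding M_def by (auto simp: sorted_wrt_append)
      qed
      finally show ?thesis .
    qed
    have main: "pfaff At M - pfaff A M = (\<Sum>x\<in>set M. (-1) ^ idx M x * (u x + v x) * pfaff A (remove1 x M @ [l]))"
      by (rule pfaff_even_main[where z = l and y = "Suc l", OF _ _ skA skAt hM hz]) (use False in \<open>simp_all add: M_def l_def\<close>)
    have "(\<Sum>k\<in>set M. (-1) ^ idx M k * (u k + v k) * Ptl (remove_part lam (Suc k)) X)
        = (\<Sum>k\<in>set M. (-1) ^ idx M k * (u k + v k) * pfaff A (remove1 k M @ [l]))"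
      by (rule sum.cong[OF refl]) (simp add: PR)
    also have "\<dots> = pfaff At M + (- pfaff A M)" using main by simp
    also have "pfaff At M = Ptl lam ((- hd xs) # tl xs)"
      unfolding PtlL At_def fY_def Y_def xs by simp
    also have "- pfaff A M = (-1) ^ (length lam + 1) * Ptl lam xs"
      unfolding PtlL A_def fX_def X_def xs using False by (simp add: l_def)
    finally show ?thesis unfolding LHS .
  qed
qed

end
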